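(* Let $\lambda$ be a positive integer that is a sum of two squares of rational integers. Then for every $1\leq k\leq 3$, every $k$-icube in $\mathbb{Z}[i]^3$ of norm $\lambda$ can be extended to a $3$-icube (of norm $\lambda$).
   Context: For $1\leq k\leq n$, a matrix $(v_1|\dotsc|v_k)\in\mathbb{Z}[i]^{n\times k}$ is a $k$-icube in $\mathbb{Z}[i]^n$ of norm $\lambda>0$ if $v_i^*v_j=\lambda$ for $i=j$ and $v_i^*v_j=0$ for $i\neq j$, where $v^*=\overline{v}^T$. An $\ell$-icube $A$ can be extended to a $k$-icube ($\ell<k$) if some $\ell$ columns of some $k$-icube form $A$. *)

theory Defs
  imports Complex_Main
begin

definition gaussian_int :: "complex \<Rightarrow> bool" where
  "gaussian_int z \<longleftrightarrow> Re z \<in> \<int> \<and> Im z \<in> \<int>"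

text \<open>An n x k matrix is represented by its entries M i j (row i < n, column j < k);
  entries outside this range are irrelevant.\<close>
definition herm_col_prod :: "nat \<Rightarrow> (nat \<Rightarrow> nat \<Rightarrow> complex) \<Rightarrow> nat \<Rightarrow> nat \<Rightarrow> complex" where
  "herm_col_prod n M j j' = (\<Sum>i<n. cnj (M i j) * M i j')"

definition icube :: "nat \<Rightarrow> nat \<Rightarrow> real \<Rightarrow> (nat \<Rightarrow> nat \<Rightarrow> complex) \<Rightarrow> bool" where
  "icube n k lam M \<longleftrightarrow> 1 \<le> k \<and> k \<le> n \<and> lam > 0 \<and>
     (\<forall>i<n. \<forall>j<k. gaussian_int (M i j)) \<and>
     (\<forall>j<k. \<forall>j'<k. herm_col_prod n M j j' = (if j = j' then complex_of_real lam else 0))"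

definition extends_to_icube :: "nat \<Rightarrow> nat \<Rightarrow> nat \<Rightarrow> real \<Rightarrow> (nat \<Rightarrow> nat \<Rightarrow> complex) \<Rightarrow> bool" where
  "extends_to_icube n l k lam A \<longleftrightarrow>
     (\<exists>B \<sigma>. icube n k lam B \<and> inj_on \<sigma> {..<l} \<and> \<sigma> ` {..<l} \<subseteq> {..<k} \<and>
        (\<forall>i<n. \<forall>j<l. B i (\<sigma> j) = A i j))"

end

theory Submission
  imports Defs
begin


lemma gi_0[simp]: "gaussian_int 0" and gi_1[simp]: "gaussian_int 1" and gi_ii[simp]: "gaussian_int \<i>"
  by (auto simp: gaussian_int_def)
lemma gi_of_int[simp]: "gaussian_int (of_int a)" by (simp add: gaussian_int_def)
lemma gi_add[simp,intro]: "gaussian_int a \<Longrightarrow> gaussian_int b \<Longrightarrow> gaussian_int (a + b)"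
  by (auto simp: gaussian_int_def)
lemma gi_diff[simp,intro]: "gaussian_int a \<Longrightarrow> gaussian_int b \<Longrightarrow> gaussian_int (a - b)"
  by (auto simp: gaussian_int_def)
lemma gi_minus[simp,intro]: "gaussian_int a \<Longrightarrow> gaussian_int (- a)"
  by (auto simp: gaussian_int_def)
lemma gi_mult[simp,intro]: "gaussian_int a \<Longrightarrow> gaussian_int b \<Longrightarrow> gaussian_int (a * b)"
  by (auto simp: gaussian_int_def)
lemma gi_cnj[simp,intro]: "gaussian_int a \<Longrightarrow> gaussian_int (cnj a)"
  by (auto simp: gaussian_int_def)

lemma gi_nonzero_norm: assumes "gaussian_int z" "z \<noteq> 0" shows "cmod z ^ 2 \<ge> 1"
proof -
  obtain a where a: "Re z = of_int a" using assms(1) by (auto simp: gaussian_int_def elim: Ints_cases)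
  obtain b where b: "Im z = of_int b" using assms(1) by (auto simp: gaussian_int_def elim: Ints_cases)
  have "a \<noteq> 0 \<or> b \<noteq> 0" using assms(2) a b by (auto simp: complex_eq_iff)
  hence "(1::int) \<le> a^2 + b^2"
  proof
    assume "a \<noteq> 0" hence "1 \<le> a^2" by (simp add: int_one_le_iff_zero_less)
    thus ?thesis by (smt (verit) zero_le_power2)
  next
    assume "b \<noteq> 0" hence "1 \<le> b^2" by (simp add: int_one_le_iff_zero_less)
    thus ?thesis by (smt (verit) zero_le_power2)
  qed
  hence "(1::real) \<le> of_int a ^ 2 + of_int b ^ 2" by (metis of_int_le_iff of_int_1 of_int_add of_int_power)
  thus ?thesis by (simp add: cmod_power2 a b)
qed

lemma round_gauss: "\<exists>q. gaussian_int q \<and> cmod (c - q) ^ 2 \<le> 1/2"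
proof -
  define q where "q = of_int (round (Re c)) + \<i> * of_int (round (Im c))"
  have g: "gaussian_int q" by (simp add: q_def gaussian_int_def)
  have r1: "\<bar>Re c - of_int (round (Re c))\<bar> \<le> 1/2"
    using of_int_round_abs_le[of "Re c"] by (simp add: abs_minus_commute)
  have r2: "\<bar>Im c - of_int (round (Im c))\<bar> \<le> 1/2"
    using of_int_round_abs_le[of "Im c"] by (simp add: abs_minus_commute)
  have "(Re c - of_int (round (Re c)))^2 \<le> (1/2)^2"
    using r1 by (metis abs_le_square_iff abs_of_nonneg divide_nonneg_nonneg zero_le_one zero_le_numeral abs_le_iff power2_abs)
  moreover have "(Im c - of_int (round (Im c)))^2 \<le> (1/2)^2"
    using r2 by (metis abs_le_square_iff abs_of_nonneg divide_nonneg_nonneg zero_le_one zero_le_numeral abs_le_iff power2_abs)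
  moreover have "cmod (c - q)^2 = (Re c - of_int (round (Re c)))^2 + (Im c - of_int (round (Im c)))^2"
    by (simp add: cmod_power2 q_def)
  moreover have "(1/2::real)^2 = 1/4" by (simp add: power2_eq_square)
  ultimately have "cmod (c - q)^2 \<le> 1/2" by linarith
  thus ?thesis using g by blast
qed

lemma gauss_div: assumes "gaussian_int a" "gaussian_int b" "b \<noteq> 0"
  shows "\<exists>q r. gaussian_int q \<and> gaussian_int r \<and> a = q * b + r \<and> cmod r ^ 2 \<le> cmod b ^ 2 / 2"
proof -
  obtain q where q: "gaussian_int q" "cmod (a / b - q) ^ 2 \<le> 1/2" using round_gauss by blast
  define r where "r = a - q * b"
  have "r = b * (a / b - q)" using assms(3) by (simp add: r_def field_simps)
  hence "cmod r ^ 2 = cmod b ^ 2 * cmod (a / b - q) ^ 2" by (simp add: norm_mult power_mult_distrib)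
  also have "\<dots> \<le> cmod b ^ 2 * (1/2)" using q(2) by (intro mult_left_mono) auto
  finally show ?thesis using q(1) assms by (intro exI[of _ q] exI[of _ r]) (auto simp: r_def)
qed

definition bz :: "complex \<Rightarrow> complex \<Rightarrow> bool" where
  "bz a b \<longleftrightarrow> (\<exists>g a' b' x y. gaussian_int g \<and> gaussian_int a' \<and> gaussian_int b' \<and> gaussian_int x \<and>
      gaussian_int y \<and> a = g * a' \<and> b = g * b' \<and> a' * x + b' * y = 1)"

lemma bez2_aux: "\<forall>a b. gaussian_int a \<longrightarrow> gaussian_int b \<longrightarrow> cmod b ^ 2 < real n \<longrightarrow> bz a b"
proof (induction n)
  case 0 then show ?case by auto
next
  case (Suc n)
  show ?case
  proof (intro allI impI)
    fix a b assume a: "gaussian_int a" and b: "gaussian_int b" and lt: "cmod b ^ 2 < real (Suc n)"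
    show "bz a b"
    proof (cases "b = 0")
      case True
      show ?thesis
      proof (cases "a = 0")
        case True
        then show ?thesis using \<open>b = 0\<close> unfolding bz_def
          by (intro exI[of _ 0] exI[of _ 1] exI[of _ 0] exI[of _ 1] exI[of _ 0]) auto
      next
        case False
        then show ?thesis using \<open>b = 0\<close> a unfolding bz_def
          by (intro exI[of _ a] exI[of _ 1] exI[of _ 0] exI[of _ 1] exI[of _ 0]) auto
      qed
    next
      case False
      obtain q r where qr: "gaussian_int q" "gaussian_int r" "a = q * b + r" "cmod r ^ 2 \<le> cmod b ^ 2 / 2"
        using gauss_div[OF a b False] by blast
      have "cmod b ^ 2 \<ge> 1" using gi_nonzero_norm[OF b False] .
      hence "n \<noteq> 0" using lt by (cases n) auto
      hence "real n \<ge> 1" by simp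
      hence "cmod r ^ 2 < real n" using qr(4) lt \<open>cmod b ^ 2 \<ge> 1\<close> by linarith
      hence "bz b r" using Suc.IH b qr(2) by blast
      then obtain g b' r' x y where h: "gaussian_int g" "gaussian_int b'" "gaussian_int r'" "gaussian_int x"
        "gaussian_int y" "b = g * b'" "r = g * r'" "b' * x + r' * y = 1" unfolding bz_def by blast
      show ?thesis unfolding bz_def
        apply (rule exI[of _ g], rule exI[of _ "q * b' + r'"], rule exI[of _ b'], rule exI[of _ y],
               rule exI[of _ "x - q * y"])
        using h qr(1,3) by (auto simp: algebra_simps)
    qed
  qed
qed

lemma bez2: assumes "gaussian_int a" "gaussian_int b"
  shows "\<exists>g a' b' x y. gaussian_int g \<and> gaussian_int a' \<and> gaussian_int b' \<and> gaussian_int x \<and>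
      gaussian_int y \<and> a = g * a' \<and> b = g * b' \<and> a' * x + b' * y = 1"
proof -
  obtain n where "cmod b ^ 2 < real n" using reals_Archimedean2 by blast
  thus ?thesis using bez2_aux assms unfolding bz_def by blast
qed



definition ip :: "(nat \<Rightarrow> complex) \<Rightarrow> (nat \<Rightarrow> complex) \<Rightarrow> complex" where
 "ip x y = cnj (x 0) * y 0 + cnj (x 1) * y 1 + cnj (x 2) * y 2"
definition gv :: "(nat \<Rightarrow> complex) \<Rightarrow> bool" where
 "gv x \<longleftrightarrow> gaussian_int (x 0) \<and> gaussian_int (x 1) \<and> gaussian_int (x 2)"
definition det3 :: "(nat \<Rightarrow> complex) \<Rightarrow> (nat \<Rightarrow> complex) \<Rightarrow> (nat \<Rightarrow> complex) \<Rightarrow> complex" where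
 "det3 a b c = a 0 * (b 1 * c 2 - b 2 * c 1) - a 1 * (b 0 * c 2 - b 2 * c 0) + a 2 * (b 0 * c 1 - b 1 * c 0)"
definition ccr :: "(nat \<Rightarrow> complex) \<Rightarrow> (nat \<Rightarrow> complex) \<Rightarrow> nat \<Rightarrow> complex" where
 "ccr a b k = (if k = 0 then cnj (a 1 * b 2 - a 2 * b 1) else if k = 1 then cnj (a 2 * b 0 - a 0 * b 2)
    else cnj (a 0 * b 1 - a 1 * b 0))"
definition v3 :: "complex \<Rightarrow> complex \<Rightarrow> complex \<Rightarrow> nat \<Rightarrow> complex" where
 "v3 a b c k = (if k = 0 then a else if k = 1 then b else c)"

lemma v3_simps[simp]: "v3 a b c 0 = a" "v3 a b c 1 = b" "v3 a b c (Suc 0) = b" "v3 a b c 2 = c" by (auto simp: v3_def)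
lemma ccr0[simp]: "ccr a b 0 = cnj (a 1 * b 2 - a 2 * b 1)"
  and ccr1[simp]: "ccr a b 1 = cnj (a 2 * b 0 - a 0 * b 2)"
  and ccr2[simp]: "ccr a b 2 = cnj (a 0 * b 1 - a 1 * b 0)"
  and ccr1'[simp]: "ccr a b (Suc 0) = cnj (a 2 * b 0 - a 0 * b 2)" by (auto simp: ccr_def)

lemma ip_cnj: "cnj (ip x y) = ip y x" by (simp add: ip_def mult.commute)
lemma ip_self: "ip x x = of_real (cmod (x 0) ^ 2 + cmod (x 1) ^ 2 + cmod (x 2) ^ 2)"
proof -
  have c: "\<And>z. cnj z * z = complex_of_real (cmod z ^ 2)" by (metis complex_norm_square mult.commute)
  show ?thesis by (simp only: ip_def c of_real_add)
qed
lemma ip_self_zero: assumes "ip x x = 0" shows "x 0 = 0" "x 1 = 0" "x 2 = 0"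
proof -
  have "complex_of_real (cmod (x 0) ^ 2 + cmod (x 1) ^ 2 + cmod (x 2) ^ 2) = 0" using assms ip_self[of x] by simp
  hence "cmod (x 0) ^ 2 + cmod (x 1) ^ 2 + cmod (x 2) ^ 2 = 0" by (simp only: of_real_eq_0_iff)
  hence "cmod (x 0) ^ 2 = 0 \<and> cmod (x 1) ^ 2 = 0 \<and> cmod (x 2) ^ 2 = 0"
    by (smt (verit) zero_le_power2)
  thus "x 0 = 0" "x 1 = 0" "x 2 = 0" by auto
qed

lemma gv_ip: "gv x \<Longrightarrow> gv y \<Longrightarrow> gaussian_int (ip x y)" by (simp add: gv_def ip_def)

lemma gi_real_Ints: "gaussian_int (complex_of_real r) \<Longrightarrow> r \<in> \<int>" by (simp add: gaussian_int_def)
lemma Ints_gi: "r \<in> \<int> \<Longrightarrow> gaussian_int (complex_of_real r)" by (simp add: gaussian_int_def)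

lemma gv_ip_self_nat: assumes "gv x" shows "\<exists>N::nat. ip x x = of_nat N"
proof -
  let ?r = "cmod (x 0) ^ 2 + cmod (x 1) ^ 2 + cmod (x 2) ^ 2"
  have "gaussian_int (of_real ?r)" using gv_ip[OF assms assms] ip_self[of x] by simp
  hence "?r \<in> \<int>" by (rule gi_real_Ints)
  then obtain k where k: "?r = of_int k" by (auto elim: Ints_cases)
  have "?r \<ge> 0" by simp
  hence "real_of_int k \<ge> 0" using k by linarith
  hence "k \<ge> 0" by simp
  hence "?r = of_nat (nat k)" using k by simp
  thus ?thesis using ip_self[of x] by (metis of_real_of_nat_eq)
qed

lemma normquot:
  assumes gh: "gaussian_int h" and gb: "gaussian_int \<beta>" and bnz: "\<beta> \<noteq> 0" and rZ: "r \<in> \<int>"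
    and eq: "of_real r * (\<beta> * cnj \<beta>) = h * cnj h"
  shows "\<exists>t. gaussian_int t \<and> t * cnj t = of_real r"
proof -
  obtain d h' b' x y where d: "gaussian_int d" "gaussian_int h'" "gaussian_int b'" "gaussian_int x"
      "gaussian_int y" "h = d * h'" "\<beta> = d * b'" "h' * x + b' * y = 1"
    using bez2[OF gh gb] by blast
  have dnz: "d \<noteq> 0" and bnz': "b' \<noteq> 0" using bnz d(7) by auto
  have "d * cnj d \<noteq> 0" using dnz by simp
  moreover have "(d * cnj d) * (of_real r * (b' * cnj b')) = (d * cnj d) * (h' * cnj h')"
    using eq d(6,7) by (simp add: algebra_simps)
  ultimately have eq': "of_real r * (b' * cnj b') = h' * cnj h'" by simp
  define t where "t = x * of_real r * cnj b' + y * cnj h'"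
  have gt: "gaussian_int t" unfolding t_def using d Ints_gi[OF rZ] by auto
  have "cnj h' = cnj h' * (h' * x + b' * y)" using d(8) by simp
  also have "\<dots> = x * (h' * cnj h') + b' * y * cnj h'" by (simp add: algebra_simps)
  also have "\<dots> = b' * t" unfolding t_def eq'[symmetric] by (simp add: algebra_simps)
  finally have ch: "cnj h' = b' * t" .
  hence "h' = cnj b' * cnj t" by (metis complex_cnj_cnj complex_cnj_mult)
  hence "h' * cnj h' = (b' * cnj b') * (t * cnj t)" using ch by (simp add: algebra_simps)
  hence "(b' * cnj b') * (t * cnj t) = (b' * cnj b') * of_real r" using eq' by (simp only: mult.commute)
  moreover have "b' * cnj b' \<noteq> 0" using bnz' by simp
  ultimately have "t * cnj t = of_real r" by simp
  thus ?thesis using gt by blast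
qed

lemma prim3: assumes "gv x"
  shows "\<exists>h y c. gaussian_int h \<and> gv y \<and> gv c \<and> x 0 = h * y 0 \<and> x 1 = h * y 1 \<and> x 2 = h * y 2
     \<and> c 0 * y 0 + c 1 * y 1 + c 2 * y 2 = 1"
proof -
  have g: "gaussian_int (x 0)" "gaussian_int (x 1)" "gaussian_int (x 2)" using assms by (auto simp: gv_def)
  obtain g a b p q where 1: "gaussian_int g" "gaussian_int a" "gaussian_int b" "gaussian_int p"
      "gaussian_int q" "x 0 = g * a" "x 1 = g * b" "a * p + b * q = 1"
    using bez2[OF g(1) g(2)] by blast
  obtain h g' e p' q' where 2: "gaussian_int h" "gaussian_int g'" "gaussian_int e" "gaussian_int p'"
      "gaussian_int q'" "g = h * g'" "x 2 = h * e" "g' * p' + e * q' = 1"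
    using bez2[OF 1(1) g(3)] by blast
  have "(p' * p) * (g' * a) + (p' * q) * (g' * b) + q' * e = p' * g' * (a * p + b * q) + e * q'"
    by (simp add: algebra_simps)
  also have "\<dots> = 1" using 1(8) 2(8) by (simp add: mult.commute)
  finally have c: "(p' * p) * (g' * a) + (p' * q) * (g' * b) + q' * e = 1" .
  show ?thesis
    apply (rule exI[of _ h], rule exI[of _ "v3 (g' * a) (g' * b) e"], rule exI[of _ "v3 (p' * p) (p' * q) q'"])
    using 1 2 c by (auto simp: gv_def)
qed

lemma completion: assumes gv: "gv v" "gv c" and p: "c 0 * v 0 + c 1 * v 1 + c 2 * v 2 = 1"
  shows "\<exists>m n. gv m \<and> gv n \<and> det3 m v n = 1"
proof -
  have g: "gaussian_int (v 0)" "gaussian_int (v 1)" "gaussian_int (v 2)" using gv by (auto simp: gv_def)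
  have gc: "gaussian_int (c 0)" "gaussian_int (c 1)" "gaussian_int (c 2)" using gv by (auto simp: gv_def)
  obtain g a b x y where 1: "gaussian_int g" "gaussian_int a" "gaussian_int b" "gaussian_int x"
      "gaussian_int y" "v 0 = g * a" "v 1 = g * b" "a * x + b * y = 1"
    using bez2[OF g(1) g(2)] by blast
  define pp where "pp = c 0 * a + c 1 * b"
  have e2: "g * pp + c 2 * v 2 = 1" using p 1(6,7) by (simp add: pp_def algebra_simps)
  have "det3 (v3 y (-x) 0) v (v3 (- c 2 * a) (- c 2 * b) pp) = (a * x + b * y) * (g * pp + c 2 * v 2)"
    unfolding det3_def using 1(6,7) by (simp add: algebra_simps)
  also have "\<dots> = 1" using 1(8) e2 by simp
  finally have D: "det3 (v3 y (-x) 0) v (v3 (- c 2 * a) (- c 2 * b) pp) = 1" .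
  show ?thesis
    apply (rule exI[of _ "v3 y (-x) 0"], rule exI[of _ "v3 (- c 2 * a) (- c 2 * b) pp"])
    using 1 gc D by (auto simp: gv_def pp_def)
qed

lemma gram: "det3 m v n * cnj (det3 m v n) =
  ip m m * (ip v v * ip n n - ip v n * ip n v) - ip m v * (ip v m * ip n n - ip v n * ip n m)
  + ip m n * (ip v m * ip n v - ip v v * ip n m)"
  unfolding ip_def det3_def by (simp add: algebra_simps)

lemma perp_par:
  assumes "ip a x = 0" "ip b x = 0"
  shows "ip (ccr a b) (ccr a b) * x 0 = ip (ccr a b) x * ccr a b 0"
    "ip (ccr a b) (ccr a b) * x 1 = ip (ccr a b) x * ccr a b 1"
    "ip (ccr a b) (ccr a b) * x 2 = ip (ccr a b) x * ccr a b 2"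
proof -
  let ?w = "ccr a b"
  have "ip ?w ?w * x 0 - ip ?w x * ?w 0 = - cnj (?w 1) * (cnj (b 2) * ip a x - cnj (a 2) * ip b x)
      + cnj (?w 2) * (cnj (b 1) * ip a x - cnj (a 1) * ip b x)"
    unfolding ip_def by (simp add: algebra_simps)
  thus "ip ?w ?w * x 0 = ip ?w x * ?w 0" using assms by simp
  have "ip ?w ?w * x 1 - ip ?w x * ?w 1 = cnj (?w 0) * (cnj (b 2) * ip a x - cnj (a 2) * ip b x)
      - cnj (?w 2) * (cnj (b 0) * ip a x - cnj (a 0) * ip b x)"
    unfolding ip_def by (simp add: algebra_simps)
  thus "ip ?w ?w * x 1 = ip ?w x * ?w 1" using assms by simp
  have "ip ?w ?w * x 2 - ip ?w x * ?w 2 = - cnj (?w 0) * (cnj (b 1) * ip a x - cnj (a 1) * ip b x)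
      + cnj (?w 1) * (cnj (b 0) * ip a x - cnj (a 0) * ip b x)"
    unfolding ip_def by (simp add: algebra_simps)
  thus "ip ?w ?w * x 2 = ip ?w x * ?w 2" using assms by simp
qed



lemma k2:
  assumes gv1: "gv v1" and gv2: "gv v2" and gb: "gaussian_int \<beta>" and bnz: "\<beta> \<noteq> 0"
    and n1: "ip v1 v1 = \<beta> * cnj \<beta>" and n2: "ip v2 v2 = \<beta> * cnj \<beta>" and o12: "ip v1 v2 = 0"
  shows "\<exists>u. gv u \<and> ip v1 u = 0 \<and> ip v2 u = 0 \<and> ip u u = \<beta> * cnj \<beta>"
proof -
  define L where "L = \<beta> * cnj \<beta>"
  have Lnz: "L \<noteq> 0" using bnz by (simp add: L_def)
  have gL: "gaussian_int L" using gb by (simp add: L_def)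
  have o21: "ip v2 v1 = 0" using o12 ip_cnj[of v1 v2] by simp
  define w where "w = ccr v1 v2"
  have gw: "gv w" using gv1 gv2 by (simp add: gv_def w_def)
  have o1: "ip v1 w = 0" unfolding ip_def w_def by (simp add: algebra_simps)
  have o2: "ip v2 w = 0" unfolding ip_def w_def by (simp add: algebra_simps)
  have "ip w w = ip v1 v1 * ip v2 v2 - ip v1 v2 * ip v2 v1"
    unfolding ip_def w_def by (simp add: algebra_simps)
  hence ww: "ip w w = L * L" using n1 n2 o12 o21 by (simp add: L_def)
  obtain h w' c where hw: "gaussian_int h" "gv w'" "gv c" "w 0 = h * w' 0" "w 1 = h * w' 1" "w 2 = h * w' 2"
      "c 0 * w' 0 + c 1 * w' 1 + c 2 * w' 2 = 1"
    using prim3[OF gw] by blast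
  have ww': "ip w w = (h * cnj h) * ip w' w'" unfolding ip_def using hw(4-6) by (simp add: algebra_simps)
  have hnz: "h \<noteq> 0" using ww ww' Lnz by auto
  define e where "e = (\<lambda>k. cnj (c k))"
  have ge: "gv e" using hw(3) by (simp add: gv_def e_def)
  have "ip w' e = cnj (c 0 * w' 0 + c 1 * w' 1 + c 2 * w' 2)" by (simp add: ip_def e_def algebra_simps)
  hence we: "ip w' e = 1" by (simp only: hw(7) complex_cnj_one)
  have "ip w e = cnj h * ip w' e" unfolding ip_def using hw(4-6) by (simp add: algebra_simps)
  hence we2: "ip w e = cnj h" using we by simp
  define x where "x = (\<lambda>k. L * e k - ip v1 e * v1 k - ip v2 e * v2 k)"
  have "ip v1 x = L * ip v1 e - ip v1 e * ip v1 v1 - ip v2 e * ip v1 v2" by (simp add: ip_def x_def algebra_simps)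
  hence x1: "ip v1 x = 0" using n1 o12 by (simp add: L_def)
  have "ip v2 x = L * ip v2 e - ip v1 e * ip v2 v1 - ip v2 e * ip v2 v2" by (simp add: ip_def x_def algebra_simps)
  hence x2: "ip v2 x = 0" using n2 o21 by (simp add: L_def)
  have ow1: "ip w v1 = 0" using o1 ip_cnj[of v1 w] by simp
  have ow2: "ip w v2 = 0" using o2 ip_cnj[of v2 w] by simp
  have "ip w x = L * ip w e - ip v1 e * ip w v1 - ip v2 e * ip w v2" by (simp add: ip_def x_def algebra_simps)
  hence wx: "ip w x = L * cnj h" using ow1 ow2 we2 by simp
  define R where "R = h * cnj h / L"
  have xk: "x k = R * w' k" if k: "k = 0 \<or> k = 1 \<or> k = 2" for k
  proof -
    have "ip w w * x k = ip w x * w k" using perp_par[OF x1 x2] k unfolding w_def by auto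
    hence "L * L * x k = L * cnj h * w k" using ww wx by simp
    hence "L * x k = cnj h * w k" using Lnz by (simp add: mult.assoc)
    moreover have "w k = h * w' k" using k hw(4-6) by auto
    ultimately have "L * x k = L * (R * w' k)" using Lnz by (simp add: R_def algebra_simps)
    thus ?thesis using Lnz by simp
  qed
  have gx: "gaussian_int (x k)" if "k = 0 \<or> k = 1 \<or> k = 2" for k
    using that gv1 gv2 ge gL gv_ip[OF gv1 ge] gv_ip[OF gv2 ge] by (auto simp: x_def gv_def)
  have "R = c 0 * x 0 + c 1 * x 1 + c 2 * x 2"
  proof -
    have "R = R * (c 0 * w' 0 + c 1 * w' 1 + c 2 * w' 2)" using hw(7) by simp
    also have "\<dots> = c 0 * x 0 + c 1 * x 1 + c 2 * x 2" using xk[of 0] xk[of 1] xk[of 2] by (simp add: algebra_simps)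
    finally show ?thesis .
  qed
  hence gR: "gaussian_int R" using gx[of 0] gx[of 1] gx[of 2] hw(3) by (auto simp: gv_def)
  define r where "r = cmod h ^ 2 / cmod \<beta> ^ 2"
  have hh: "h * cnj h = complex_of_real (cmod h ^ 2)" by (metis complex_norm_square)
  have bb: "L = complex_of_real (cmod \<beta> ^ 2)" unfolding L_def by (metis complex_norm_square)
  have Rr: "R = complex_of_real r" unfolding R_def r_def hh bb by simp
  have rZ: "r \<in> \<int>" using gR Rr gi_real_Ints by simp
  have "complex_of_real r * (\<beta> * cnj \<beta>) = h * cnj h" using Rr Lnz unfolding R_def L_def
    by (metis nonzero_eq_divide_eq)
  then obtain t where t: "gaussian_int t" "t * cnj t = complex_of_real r"
    using normquot[OF hw(1) gb bnz rZ] by blast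
  define u where "u = (\<lambda>k. t * w' k)"
  have gu: "gv u" using t(1) hw(2) by (simp add: gv_def u_def)
  have "ip v1 w = h * ip v1 w'" unfolding ip_def using hw(4-6) by (simp add: algebra_simps)
  hence a1: "ip v1 w' = 0" using o1 hnz by simp
  have "ip v2 w = h * ip v2 w'" unfolding ip_def using hw(4-6) by (simp add: algebra_simps)
  hence a2: "ip v2 w' = 0" using o2 hnz by simp
  have "ip v1 u = t * ip v1 w'" by (simp add: ip_def u_def algebra_simps)
  hence u1: "ip v1 u = 0" using a1 by simp
  have "ip v2 u = t * ip v2 w'" by (simp add: ip_def u_def algebra_simps)
  hence u2: "ip v2 u = 0" using a2 by simp
  have "ip u u = (t * cnj t) * ip w' w'" by (simp add: ip_def u_def algebra_simps)
  also have "\<dots> = R * ip w' w'" using t Rr by simp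
  also have "\<dots> = L" 
  proof -
    have "(h * cnj h) * ip w' w' = L * L" using ww ww' by simp
    thus ?thesis using Lnz by (simp add: R_def field_simps)
  qed
  finally show ?thesis using gu u1 u2 by (auto simp: L_def)
qed



definition inS :: "(nat \<Rightarrow> complex) \<Rightarrow> complex \<Rightarrow> (nat \<Rightarrow> complex) \<Rightarrow> bool" where
  "inS v \<beta> y \<longleftrightarrow> gv y \<and> ip v y = 0 \<and> (\<exists>t a. gaussian_int t \<and> gv a \<and> (\<forall>k. y k = t * v k + \<beta> * a k))"
definition DD :: "(nat \<Rightarrow> complex) \<Rightarrow> (nat \<Rightarrow> complex) \<Rightarrow> complex" where
  "DD y z = ip y y * ip z z - ip y z * ip z y"

lemma S_ip:
  assumes y: "inS v \<beta> y" and z: "inS v \<beta> z" and nv: "ip v v = \<beta> * cnj \<beta>" and bnz: "\<beta> \<noteq> 0"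
  shows "\<exists>h. gaussian_int h \<and> ip y z = \<beta> * cnj \<beta> * h"
proof -
  obtain t a where ta: "gaussian_int t" "gv a" "\<forall>k. y k = t * v k + \<beta> * a k" and vy: "ip v y = 0"
    using y unfolding inS_def by blast
  obtain s b where sb: "gaussian_int s" "gv b" "\<forall>k. z k = s * v k + \<beta> * b k" and vz: "ip v z = 0"
    using z unfolding inS_def by blast
  have "ip v y = t * ip v v + \<beta> * ip v a" using ta(3) by (simp add: ip_def algebra_simps)
  hence "\<beta> * (t * cnj \<beta> + ip v a) = 0" using vy nv by (simp add: algebra_simps)
  hence "t * cnj \<beta> + ip v a = 0" using bnz by simp
  hence va: "ip v a = - t * cnj \<beta>" by (metis add_eq_0_iff mult_minus_left)
  have "ip v z = s * ip v v + \<beta> * ip v b" using sb(3) by (simp add: ip_def algebra_simps)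
  hence "\<beta> * (s * cnj \<beta> + ip v b) = 0" using vz nv by (simp add: algebra_simps)
  hence "s * cnj \<beta> + ip v b = 0" using bnz by simp
  hence vb: "ip v b = - s * cnj \<beta>" by (metis add_eq_0_iff mult_minus_left)
  have av: "ip a v = - cnj t * \<beta>" using va ip_cnj[of v a] by (metis complex_cnj_cnj complex_cnj_minus complex_cnj_mult mult_minus_left)
  have "ip y z = cnj t * s * ip v v + cnj t * \<beta> * ip v b + cnj \<beta> * s * ip a v + cnj \<beta> * \<beta> * ip a b"
    using ta(3) sb(3) by (simp add: ip_def algebra_simps)
  also have "\<dots> = \<beta> * cnj \<beta> * (ip a b - cnj t * s)" using nv va vb av by (simp add: algebra_simps)
  finally show ?thesis using gv_ip[OF ta(2) sb(2)] ta(1) sb(1) by (intro exI[of _ "ip a b - cnj t * s"]) auto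
qed

lemma S_sub:
  assumes y: "inS v \<beta> y" and z: "inS v \<beta> z" and q: "gaussian_int q"
  shows "inS v \<beta> (\<lambda>k. z k - q * y k)"
proof -
  obtain t a where ta: "gaussian_int t" "gv a" "\<forall>k. y k = t * v k + \<beta> * a k" and vy: "ip v y = 0" and gy: "gv y"
    using y unfolding inS_def by blast
  obtain s b where sb: "gaussian_int s" "gv b" "\<forall>k. z k = s * v k + \<beta> * b k" and vz: "ip v z = 0" and gz: "gv z"
    using z unfolding inS_def by blast
  have "ip v (\<lambda>k. z k - q * y k) = ip v z - q * ip v y" by (simp add: ip_def algebra_simps)
  hence 1: "ip v (\<lambda>k. z k - q * y k) = 0" using vy vz by simp
  have 2: "gv (\<lambda>k. z k - q * y k)" using gy gz q by (simp add: gv_def)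
  have 3: "\<forall>k. z k - q * y k = (s - q * t) * v k + \<beta> * (b k - q * a k)" using ta(3) sb(3) by (simp add: algebra_simps)
  have 4: "gv (\<lambda>k. b k - q * a k)" using ta(2) sb(2) q by (simp add: gv_def)
  show ?thesis unfolding inS_def using 1 2 3 4 ta(1) sb(1) q
    by (intro conjI exI[of _ "s - q * t"] exI[of _ "\<lambda>k. b k - q * a k"]) auto
qed

lemma DD_sym: "DD y z = DD z y" by (simp add: DD_def algebra_simps)
lemma DD_sub: "DD y (\<lambda>k. z k - q * y k) = DD y z" by (simp add: DD_def ip_def algebra_simps)
lemma round_id: "ip y y * ip (\<lambda>k. z k - q * y k) (\<lambda>k. z k - q * y k) =
   DD y z + (q * ip y y - ip y z) * cnj (q * ip y y - ip y z)"
  by (simp add: DD_def ip_def algebra_simps)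

lemma S_norm:
  assumes y: "inS v \<beta> y" and nv: "ip v v = \<beta> * cnj \<beta>" and bnz: "\<beta> \<noteq> 0"
  shows "\<exists>N::nat. ip y y = \<beta> * cnj \<beta> * of_nat N"
proof -
  obtain h where h: "gaussian_int h" "ip y y = \<beta> * cnj \<beta> * h" using S_ip[OF y y nv bnz] by blast
  define l where "l = cmod \<beta> ^ 2"
  have L: "\<beta> * cnj \<beta> = complex_of_real l" unfolding l_def by (metis complex_norm_square)
  have lpos: "l > 0" using bnz by (simp add: l_def)
  define rho where "rho = cmod (y 0) ^ 2 + cmod (y 1) ^ 2 + cmod (y 2) ^ 2"
  have yy: "ip y y = complex_of_real rho" using ip_self[of y] by (simp add: rho_def)
  have "h = complex_of_real (rho / l)" using h(2) L yy lpos by (simp add: field_simps)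
  hence "rho / l \<in> \<int>" using h(1) gi_real_Ints by simp
  then obtain k where k: "rho / l = of_int k" by (auto elim: Ints_cases)
  have "rho \<ge> 0" by (simp add: rho_def)
  hence "rho / l \<ge> 0" using lpos by simp
  hence "k \<ge> 0" using k by simp
  hence "h = of_nat (nat k)" using \<open>h = _\<close> k by simp
  thus ?thesis using h(2) by blast
qed

lemma k1prim:
  assumes gvv: "gv v" and gvc: "gv c" and cv: "c 0 * v 0 + c 1 * v 1 + c 2 * v 2 = 1"
    and gb: "gaussian_int \<beta>" and nv: "ip v v = \<beta> * cnj \<beta>"
  shows "\<exists>y. gv y \<and> ip v y = 0 \<and> ip y y = \<beta> * cnj \<beta>"
proof -
  have bnz: "\<beta> \<noteq> 0"
  proof
    assume "\<beta> = 0"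
    hence "ip v v = 0" using nv by simp
    hence "v 0 = 0" "v 1 = 0" "v 2 = 0" using ip_self_zero by auto
    thus False using cv by simp
  qed
  define L where "L = \<beta> * cnj \<beta>"
  have Lnz: "L \<noteq> 0" using bnz by (simp add: L_def)
  have gL: "gaussian_int L" using gb by (simp add: L_def)
  have cL: "cnj L = L" by (simp add: L_def mult.commute)
  obtain m n where mn: "gv m" "gv n" "det3 m v n = 1" using completion[OF gvv gvc cv] by blast
  obtain g p' q' x y where b: "gaussian_int g" "gaussian_int p'" "gaussian_int q'" "gaussian_int x"
      "gaussian_int y" "ip v m = g * p'" "ip v n = g * q'" "p' * x + q' * y = 1"
    using bez2[OF gv_ip[OF gvv mn(1)] gv_ip[OF gvv mn(2)]] by blast
  define m' where "m' = (\<lambda>k. q' * m k - p' * n k)"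
  define n' where "n' = (\<lambda>k. x * m k + y * n k)"
  have gm': "gv m'" using mn b by (simp add: gv_def m'_def)
  have gn': "gv n'" using mn b by (simp add: gv_def n'_def)
  have "det3 m' v n' = (q' * y + p' * x) * det3 m v n" unfolding det3_def m'_def n'_def
    by (simp add: algebra_simps)
  hence dt: "det3 m' v n' = 1" using mn(3) b(8) by (simp add: add.commute)
  have "ip v m' = q' * ip v m - p' * ip v n" by (simp add: ip_def m'_def algebra_simps)
  hence vm: "ip v m' = 0" using b(6,7) by simp
  have mv: "ip m' v = 0" using vm ip_cnj[of v m'] by simp
  define s where "s = ip v n'"
  have ns: "ip n' v = cnj s" using ip_cnj[of v n'] by (simp add: s_def)
  have G: "ip m' m' * (L * ip n' n' - s * cnj s) - ip m' n' * (L * ip n' m') = 1"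
  proof -
    have "1 = det3 m' v n' * cnj (det3 m' v n')" using dt by simp
    also have "\<dots> = ip m' m' * (ip v v * ip n' n' - ip v n' * ip n' v) - ip m' v * (ip v m' * ip n' n' - ip v n' * ip n' m')
      + ip m' n' * (ip v m' * ip n' v - ip v v * ip n' m')" by (rule gram)
    also have "\<dots> = ip m' m' * (L * ip n' n' - s * cnj s) - ip m' n' * (L * ip n' m')"
      using vm mv ns nv by (simp add: L_def s_def algebra_simps)
    finally show ?thesis by simp
  qed
  define y1 where "y1 = (\<lambda>k. \<beta> * m' k)"
  define y2 where "y2 = (\<lambda>k. s * v k - L * n' k)"
  have e11: "ip y1 y1 = L * ip m' m'" by (simp add: ip_def y1_def L_def algebra_simps)
  have "ip y1 y2 = cnj \<beta> * (s * ip m' v - L * ip m' n')" by (simp add: ip_def y1_def y2_def algebra_simps)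
  hence e12: "ip y1 y2 = - cnj \<beta> * L * ip m' n'" using mv by simp
  have "ip y2 y1 = cnj (ip y1 y2)" by (simp add: ip_cnj)
  also have "\<dots> = - \<beta> * cnj L * cnj (ip m' n')" unfolding e12 by simp
  also have "\<dots> = - \<beta> * L * ip n' m'" using cL by (simp add: ip_cnj)
  finally have e21: "ip y2 y1 = - \<beta> * L * ip n' m'" .
  have "ip y2 y2 = cnj s * s * ip v v - cnj s * L * ip v n' - cnj L * s * ip n' v + cnj L * L * ip n' n'"
    by (simp add: ip_def y2_def algebra_simps)
  hence e22: "ip y2 y2 = L * L * ip n' n' - L * s * cnj s" using nv ns cL by (simp add: L_def s_def algebra_simps)
  have "DD y1 y2 = L * L * (ip m' m' * (L * ip n' n' - s * cnj s) - ip m' n' * (L * ip n' m'))"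
    unfolding DD_def e11 e12 e21 e22 by (simp add: L_def algebra_simps)
  hence D12: "DD y1 y2 = L * L" using G by simp
  have gs: "gaussian_int s" using gv_ip[OF gvv gn'] by (simp add: s_def)
  have S1: "inS v \<beta> y1"
  proof -
    have "ip v y1 = \<beta> * ip v m'" by (simp add: ip_def y1_def algebra_simps)
    hence "ip v y1 = 0" using vm by simp
    moreover have "gv y1" using gm' gb by (simp add: gv_def y1_def)
    moreover have "\<forall>k. y1 k = 0 * v k + \<beta> * m' k" by (simp add: y1_def)
    ultimately show ?thesis unfolding inS_def using gm' gi_0 by blast
  qed
  have S2: "inS v \<beta> y2"
  proof -
    have "ip v y2 = s * ip v v - L * ip v n'" by (simp add: ip_def y2_def algebra_simps)
    hence "ip v y2 = 0" using nv by (simp add: L_def s_def)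
    moreover have "gv y2" using gn' gvv gs gL by (simp add: gv_def y2_def)
    moreover have "\<forall>k. y2 k = s * v k + \<beta> * (- cnj \<beta> * n' k)" by (simp add: y2_def L_def algebra_simps)
    moreover have "gv (\<lambda>k. - cnj \<beta> * n' k)" using gn' gb by (simp add: gv_def)
    ultimately show ?thesis unfolding inS_def using gs by blast
  qed
  define good where "good = (\<lambda>N::nat. \<exists>z1 z2. inS v \<beta> z1 \<and> inS v \<beta> z2 \<and> DD z1 z2 = L * L \<and> ip z1 z1 = L * of_nat N)"
  obtain N0 where "ip y1 y1 = L * of_nat N0" using S_norm[OF S1 nv bnz] by (auto simp: L_def)
  hence "good N0" unfolding good_def using S1 S2 D12 by blast
  define N where "N = (LEAST N. good N)"
  have gN: "good N" unfolding N_def using \<open>good N0\<close> by (rule LeastI)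
  have leN: "\<And>N'. good N' \<Longrightarrow> N \<le> N'" unfolding N_def by (rule Least_le)
  obtain z1 z2 where z: "inS v \<beta> z1" "inS v \<beta> z2" "DD z1 z2 = L * L" "ip z1 z1 = L * of_nat N"
    using gN unfolding good_def by blast
  have Nnz: "N \<noteq> 0"
  proof
    assume "N = 0"
    hence "ip z1 z1 = 0" using z(4) by simp
    hence "z1 0 = 0" "z1 1 = 0" "z1 2 = 0" using ip_self_zero by auto
    hence "DD z1 z2 = 0" by (simp add: DD_def ip_def)
    thus False using z(3) Lnz by simp
  qed
  define A where "A = ip z1 z1"
  define B where "B = ip z1 z2"
  obtain q where q: "gaussian_int q" "cmod (B / A - q) ^ 2 \<le> 1/2" using round_gauss by blast
  define z where "z = (\<lambda>k. z2 k - q * z1 k)"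
  have Sz: "inS v \<beta> z" unfolding z_def by (rule S_sub[OF z(1) z(2) q(1)])
  have Dz: "DD z z1 = L * L" using DD_sub[of z1 z2 q] DD_sym[of z z1] z(3) by (simp add: z_def)
  obtain Nz where Nz: "ip z z = L * of_nat Nz" using S_norm[OF Sz nv bnz] by (auto simp: L_def)
  have "good Nz" unfolding good_def using Sz z(1) Dz Nz by blast
  hence NNz: "N \<le> Nz" by (rule leN)
  have id: "A * ip z z = L * L + (q * A - B) * cnj (q * A - B)"
    using round_id[of z1 z2 q] z(3) unfolding A_def B_def z_def by simp
  define l where "l = cmod \<beta> ^ 2"
  have Ll: "L = complex_of_real l" unfolding l_def L_def by (metis complex_norm_square)
  have lpos: "l > 0" using bnz by (simp add: l_def)
  have Anz: "A \<noteq> 0" using z(4) Nnz Lnz by (simp add: A_def)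
  have qab: "(q * A - B) * cnj (q * A - B) = complex_of_real (cmod (q * A - B) ^ 2)" by (metis complex_norm_square)
  have "complex_of_real ((l * N) * (l * Nz)) = complex_of_real (l * l + cmod (q * A - B) ^ 2)"
    using id qab Ll z(4) Nz by (simp add: A_def)
  hence eqr: "(l * N) * (l * Nz) = l * l + cmod (q * A - B) ^ 2" by (simp only: of_real_eq_iff)
  have "q * A - B = - A * (B / A - q)" using Anz by (simp add: field_simps)
  hence "cmod (q * A - B) ^ 2 = cmod A ^ 2 * cmod (B / A - q) ^ 2" by (simp add: norm_mult power_mult_distrib)
  also have "cmod A = l * N" using z(4) Ll lpos by (simp add: A_def norm_mult)
  finally have "cmod (q * A - B) ^ 2 = (l * N) ^ 2 * cmod (B / A - q) ^ 2" .
  hence "cmod (q * A - B) ^ 2 \<le> (l * N) ^ 2 * (1/2)"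
    using q(2) mult_left_mono[OF q(2), of "(l * N) ^ 2"] by simp
  moreover have "(l * N) * (l * N) \<le> (l * N) * (l * Nz)" using NNz lpos by (intro mult_left_mono) auto
  ultimately have "(l * N) ^ 2 \<le> l * l + (l * N) ^ 2 * (1/2)" using eqr by (simp add: power2_eq_square)
  hence "l ^ 2 * (real N ^ 2) \<le> l ^ 2 * 2" by (simp add: power2_eq_square algebra_simps)
  hence "real N ^ 2 \<le> 2" using lpos by simp
  hence "N \<le> 1"
  proof -
    assume h: "real N ^ 2 \<le> 2"
    show "N \<le> 1"
    proof (rule ccontr)
      assume "\<not> N \<le> 1"
      hence "real N \<ge> 2" by simp
      hence "real N ^ 2 \<ge> 2 ^ 2" by (rule power_mono) simp
      thus False using h by simp
    qed
  qed
  hence "N = 1" using Nnz by simp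
  hence "ip z1 z1 = L" using z(4) by simp
  moreover have "gv z1" "ip v z1 = 0" using z(1) unfolding inS_def by auto
  ultimately show ?thesis by (auto simp: L_def)
qed

lemma k1:
  assumes gvv: "gv v" and gb: "gaussian_int \<beta>" and nv: "ip v v = \<beta> * cnj \<beta>" and bnz: "\<beta> \<noteq> 0"
  shows "\<exists>w. gv w \<and> ip v w = 0 \<and> ip w w = \<beta> * cnj \<beta>"
proof -
  obtain h v' c where hv: "gaussian_int h" "gv v'" "gv c" "v 0 = h * v' 0" "v 1 = h * v' 1" "v 2 = h * v' 2"
      "c 0 * v' 0 + c 1 * v' 1 + c 2 * v' 2 = 1"
    using prim3[OF gvv] by blast
  have vv: "ip v v = (h * cnj h) * ip v' v'" unfolding ip_def using hv(4-6) by (simp add: algebra_simps)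
  have hnz: "h \<noteq> 0" using vv nv bnz by auto
  obtain K where K: "ip v' v' = of_nat K" using gv_ip_self_nat[OF hv(2)] by blast
  have "complex_of_real (real K) * (h * cnj h) = \<beta> * cnj \<beta>" using vv nv K by (simp add: mult.commute)
  then obtain t where t: "gaussian_int t" "t * cnj t = complex_of_real (real K)"
    using normquot[OF gb hv(1) hnz] by (metis Ints_of_nat)
  have "ip v' v' = t * cnj t" using t K by simp
  then obtain y where y: "gv y" "ip v' y = 0" "ip y y = t * cnj t" using k1prim[OF hv(2) hv(3) hv(7) t(1)] by blast
  define w where "w = (\<lambda>k. h * y k)"
  have "gv w" using y(1) hv(1) by (simp add: gv_def w_def)
  moreover have "ip v w = (cnj h * h) * ip v' y" unfolding ip_def w_def using hv(4-6) by (simp add: algebra_simps)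
  moreover have "ip w w = (h * cnj h) * ip y y" by (simp add: ip_def w_def algebra_simps)
  ultimately show ?thesis using y(2,3) vv \<open>ip v' v' = t * cnj t\<close> nv by (intro exI[of _ w]) auto
qed


lemma hcp: "herm_col_prod 3 M j j' = ip (\<lambda>i. M i j) (\<lambda>i. M i j')"
  by (simp add: herm_col_prod_def ip_def eval_nat_numeral sum.lessThan_Suc)

lemma less3: "(i::nat) < 3 \<Longrightarrow> i = 0 \<or> i = 1 \<or> i = 2" by auto

lemma frame_icube:
  assumes g: "gv x" "gv y" "gv z" and lp: "lam > 0"
    and n: "ip x x = complex_of_real lam" "ip y y = complex_of_real lam" "ip z z = complex_of_real lam"
    and o: "ip x y = 0" "ip x z = 0" "ip y z = 0"
  shows "icube 3 3 lam (\<lambda>i j. if j = 0 then x i else if j = 1 then y i else z i)"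
proof -
  have o': "ip y x = 0" "ip z x = 0" "ip z y = 0" using o ip_cnj[of x y] ip_cnj[of x z] ip_cnj[of y z] by auto
  have G: "gaussian_int ((if j = 0 then x i else if j = 1 then y i else z i))" if "i < 3" "j < 3" for i j :: nat
    using less3[OF that(1)] g by (auto simp: gv_def)
  have H: "herm_col_prod 3 (\<lambda>i j. if j = 0 then x i else if j = 1 then y i else z i) j j' =
      (if j = j' then complex_of_real lam else 0)" if "j < 3" "j' < 3" for j j' :: nat
    unfolding hcp using less3[OF that(1)] less3[OF that(2)] n o o' by auto
  show ?thesis unfolding icube_def using G H lp by auto
qed

lemma ext2:
  assumes gx: "gv x" and gy: "gv y" and gb: "gaussian_int \<beta>" and bnz: "\<beta> \<noteq> 0"
    and nx: "ip x x = \<beta> * cnj \<beta>" and ny: "ip y y = \<beta> * cnj \<beta>" and oxy: "ip x y = 0"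
    and bl: "\<beta> * cnj \<beta> = complex_of_real lam" and lp: "lam > 0"
  shows "\<exists>B. icube 3 3 lam B \<and> (\<forall>i. B i 0 = x i) \<and> (\<forall>i. B i 1 = y i)"
proof -
  obtain u where u: "gv u" "ip x u = 0" "ip y u = 0" "ip u u = \<beta> * cnj \<beta>"
    using k2[OF gx gy gb bnz nx ny oxy] by blast
  have "icube 3 3 lam (\<lambda>i j. if j = 0 then x i else if j = 1 then y i else u i)"
    by (rule frame_icube[OF gx gy u(1) lp]) (use nx ny oxy u bl in auto)
  thus ?thesis by (intro exI[of _ "\<lambda>i j. if j = 0 then x i else if j = 1 then y i else u i"]) auto
qed

theorem mainTheorem4:
  fixes lam :: int and k :: nat and A :: "nat \<Rightarrow> nat \<Rightarrow> complex"
  assumes "lam > 0"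
    and "\<exists>a b :: int. lam = a\<^sup>2 + b\<^sup>2"
    and "1 \<le> k" and "k \<le> 3"
    and "icube 3 k (real_of_int lam) A"
  shows "extends_to_icube 3 k 3 (real_of_int lam) A"
proof -
  obtain a b :: int where ab: "lam = a\<^sup>2 + b\<^sup>2" using assms(2) by blast
  define \<beta> where "\<beta> = complex_of_int a + \<i> * complex_of_int b"
  have gb: "gaussian_int \<beta>" by (simp add: \<beta>_def gaussian_int_def)
  have bb: "\<beta> * cnj \<beta> = complex_of_real (real_of_int lam)"
    unfolding complex_mult_cnj by (simp add: \<beta>_def ab)
  have bnz: "\<beta> \<noteq> 0" using bb assms(1) by auto
  have lp: "real_of_int lam > 0" using assms(1) by simp
  have ic: "\<forall>i<3. \<forall>j<k. gaussian_int (A i j)"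
    "\<forall>j<k. \<forall>j'<k. herm_col_prod 3 A j j' = (if j = j' then complex_of_real (real_of_int lam) else 0)"
    using assms(5) unfolding icube_def by auto
  define c0 where "c0 = (\<lambda>i. A i 0)"
  define c1 where "c1 = (\<lambda>i. A i 1)"
  have g0: "gv c0" using ic(1) assms(3) by (simp add: gv_def c0_def)
  have n0: "ip c0 c0 = \<beta> * cnj \<beta>" using ic(2) assms(3) bb hcp[of A 0 0] by (simp add: c0_def)
  have k123: "k = 1 \<or> k = 2 \<or> k = 3" using assms(3,4) by auto
  show ?thesis
  proof (cases "k = 3")
    case True
    then show ?thesis unfolding extends_to_icube_def using assms(5)
      by (intro exI[of _ A] exI[of _ id]) auto
  next
    case k3: False
    obtain B where B: "icube 3 3 (real_of_int lam) B" "\<forall>i. B i 0 = c0 i" "k = 2 \<longrightarrow> (\<forall>i. B i 1 = c1 i)"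
    proof (cases "k = 2")
      case True
      have "gv c1" using ic(1) True by (simp add: gv_def c1_def)
      moreover have "ip c0 c1 = 0" using ic(2) True hcp[of A 0 1] by (simp add: c0_def c1_def)
      moreover have "ip c1 c1 = \<beta> * cnj \<beta>" using ic(2) True bb hcp[of A 1 1] by (simp add: c1_def)
      ultimately show ?thesis using that ext2[OF g0 _ gb bnz n0 _ _ bb lp, of c1] by blast
    next
      case False
      obtain w where w: "gv w" "ip c0 w = 0" "ip w w = \<beta> * cnj \<beta>" using k1[OF g0 gb n0 bnz] by blast
      show ?thesis using that ext2[OF g0 w(1) gb bnz n0 w(3) w(2) bb lp] False by blast
    qed
    have "\<forall>i<3. \<forall>j<k. B i (id j) = A i j"
    proof (intro allI impI)
      fix i j :: nat assume "i < 3" "j < k"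
      show "B i (id j) = A i j"
      proof (cases "j = 0")
        case True then show ?thesis using B(2) by (simp add: c0_def)
      next
        case False
        hence "j = 1" "k = 2" using \<open>j < k\<close> k3 k123 by auto
        then show ?thesis using B(3) by (simp add: c1_def)
      qed
    qed
    then show ?thesis unfolding extends_to_icube_def using assms(4) B(1)
      by (intro exI[of _ B] exI[of _ id]) auto
  qed
qed

end
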